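(* Let $c\in[0,1]$. For every countable collection of languages $\mathcal{L}$ there is a set-based generator that generates in the limit from $\mathcal{L}$ and achieves set-based upper density at least $1-c$ under adversaries that use an enumeration with finite noise and $c$-omissions. In particular, if the adversary uses an enumeration with finite noise and finite omissions, there is a set-based generator that generates in the limit from $\mathcal{L}$ and achieves set-based upper density $1$.
   Context: The universe is $U=\mathbb{N}$ with its natural order. A language is an infinite subset of $U$; a collection is a countable family of languages. For $A,B\subseteq\mathbb{N}$ with $B=\{b_1<b_2<\cdots\}$, $\mu_{\rm up}(A,B)=\limsup_n\frac1n|A\cap\{b_1,\dots,b_n\}|$ and $\mu_{\rm low}(A,B)=\liminf_n\frac1n|A\cap\{b_1,\dots,b_n\}|$. An enumeration is a sequence of distinct elements of $U$; $S_n=\{x_1,\dots,x_n\}$. An enumeration of $L$ with finite noise is a sequence in which every element of $L$ appears exactly once and $|\{x_1,x_2,\dots\}\setminus L|<\infty$. An enumeration of $K$ with finite noise and $c$-omissions is an enumeration with finite noise of some $\hat K\subseteq K$ with $\mu_{\rm low}(\hat K,K)\ge 1-c$; with finite noise and finite omissions it is one of some $\hat K\subseteq K$ with $|K\setminus\hat K|<\infty$. A set-based generator is a sequence of maps that, given $x_1,\dots,x_n$ (and knowledge of $\mathcal{L}$, not of $K$), outputs a set $A_n\subseteq U\setminus S_n$. It generates in the limit if for every $K\in\mathcal{L}$ and every admissible enumeration of $K$ there is $n^\star$ with $A_n\subseteq K$ for all $n\ge n^\star$. It achieves set-based upper density $\rho$ if $\limsup_n\mu_{\rm low}(A_n,K)\ge\rho$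 (for every such $K$ and enumeration). *)

theory Defs
  imports Complex_Main "HOL-Library.Countable_Set" "HOL-Library.Infinite_Set"
    "HOL-Library.Extended_Real" "HOL-Library.Liminf_Limsup"
begin

text \<open>Universe U = nat. The elements of an infinite set B, listed increasingly
  b_1 < b_2 < ..., are Infinite_Set.enumerate B 0, enumerate B 1, ...
  (0-indexed).\<close>

definition prefix_B :: "nat set \<Rightarrow> nat \<Rightarrow> nat set" where
  "prefix_B B n = Infinite_Set.enumerate B ` {..<n}"

definition mu_low :: "nat set \<Rightarrow> nat set \<Rightarrow> ereal" where
  "mu_low A B = liminf (\<lambda>n. ereal (real (card (A \<inter> prefix_B B (Suc n))) / real (Suc n)))"

definition mu_up :: "nat set \<Rightarrow> nat set \<Rightarrow> ereal" where
  "mu_up A B = limsup (\<lambda>n. ereal (real (card (A \<inter> prefix_B B (Suc n))) / real (Suc n)))"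

definition collection :: "nat set set \<Rightarrow> bool" where
  "collection Lc \<longleftrightarrow> countable Lc \<and> (\<forall>L\<in>Lc. infinite L)"

definition enumeration :: "(nat \<Rightarrow> nat) \<Rightarrow> bool" where
  "enumeration x \<longleftrightarrow> inj x"

text \<open>S_n = {x_1,...,x_n}; with 0-indexed sequences this is x ` {..<n}.\<close>
definition S :: "(nat \<Rightarrow> nat) \<Rightarrow> nat \<Rightarrow> nat set" where
  "S x n = x ` {..<n}"

definition enum_finite_noise :: "nat set \<Rightarrow> (nat \<Rightarrow> nat) \<Rightarrow> bool" where
  "enum_finite_noise L x \<longleftrightarrow> enumeration x \<and> L \<subseteq> range x \<and> finite (range x - L)"

definition enum_noise_c_omissions :: "real \<Rightarrow> nat set \<Rightarrow> (nat \<Rightarrow> nat) \<Rightarrow> bool" where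
  "enum_noise_c_omissions c K x \<longleftrightarrow>
     (\<exists>Kh. Kh \<subseteq> K \<and> mu_low Kh K \<ge> ereal (1 - c) \<and> enum_finite_noise Kh x)"

definition enum_noise_fin_omissions :: "nat set \<Rightarrow> (nat \<Rightarrow> nat) \<Rightarrow> bool" where
  "enum_noise_fin_omissions K x \<longleftrightarrow>
     (\<exists>Kh. Kh \<subseteq> K \<and> finite (K - Kh) \<and> enum_finite_noise Kh x)"

definition set_generator :: "(nat list \<Rightarrow> nat set) \<Rightarrow> bool" where
  "set_generator G \<longleftrightarrow> (\<forall>xs. G xs \<inter> set xs = {})"

definition gen_out :: "(nat list \<Rightarrow> nat set) \<Rightarrow> (nat \<Rightarrow> nat) \<Rightarrow> nat \<Rightarrow> nat set" where
  "gen_out G x n = G (map x [0..<n])"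

definition generates_in_limit ::
  "(nat list \<Rightarrow> nat set) \<Rightarrow> nat set set \<Rightarrow> (nat set \<Rightarrow> (nat \<Rightarrow> nat) \<Rightarrow> bool) \<Rightarrow> bool" where
  "generates_in_limit G Lc Adm \<longleftrightarrow>
     (\<forall>K\<in>Lc. \<forall>x. Adm K x \<longrightarrow> (\<exists>n0. \<forall>n\<ge>n0. gen_out G x n \<subseteq> K))"

definition achieves_set_upper_density ::
  "(nat list \<Rightarrow> nat set) \<Rightarrow> nat set set \<Rightarrow> (nat set \<Rightarrow> (nat \<Rightarrow> nat) \<Rightarrow> bool) \<Rightarrow> real \<Rightarrow> bool" where
  "achieves_set_upper_density G Lc Adm \<rho> \<longleftrightarrow>
     (\<forall>K\<in>Lc. \<forall>x. Adm K x \<longrightarrow> limsup (\<lambda>n. mu_low (gen_out G x n) K) \<ge> ereal \<rho>)"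

end

theory Submission
  imports Defs
begin

lemma prefix_finite: "finite (prefix_B B n)"
  unfolding prefix_B_def by simp

lemma mu_low_mono: "A \<subseteq> A' \<Longrightarrow> mu_low A B \<le> mu_low A' B"
  unfolding mu_low_def
  by (intro Liminf_mono always_eventually allI iffD2[OF ereal_less_eq(3)] divide_right_mono of_nat_mono card_mono)
     (auto simp: prefix_finite)

lemma mu_low_diff_finite:
  assumes "finite F"
  shows "mu_low A B \<le> mu_low (A - F) B"
proof -
  define r where "r n = real (card (A \<inter> prefix_B B (Suc n))) / real (Suc n)" for n
  define r' where "r' n = real (card ((A - F) \<inter> prefix_B B (Suc n))) / real (Suc n)" for n
  define d where "d = real (card F)"
  have key: "r n \<le> r' n + d / real (Suc n)" for n
  proof -
    have "A \<inter> prefix_B B (Suc n) \<subseteq> ((A - F) \<inter> prefix_B B (Suc n)) \<union> F" by auto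
    then have "card (A \<inter> prefix_B B (Suc n)) \<le> card (((A - F) \<inter> prefix_B B (Suc n)) \<union> F)"
      by (intro card_mono) (auto simp: prefix_finite assms)
    also have "\<dots> \<le> card ((A - F) \<inter> prefix_B B (Suc n)) + card F" by (rule card_Un_le)
    finally have "real (card (A \<inter> prefix_B B (Suc n))) \<le> real (card ((A - F) \<inter> prefix_B B (Suc n))) + d"
      unfolding d_def by linarith
    then have "real (card (A \<inter> prefix_B B (Suc n))) / real (Suc n) \<le> (real (card ((A - F) \<inter> prefix_B B (Suc n))) + d) / real (Suc n)"
      by (rule divide_right_mono) simp
    then show ?thesis unfolding r_def r'_def add_divide_distrib .
  qed
  have "mu_low A B = liminf (\<lambda>n. ereal (r n))" unfolding mu_low_def r_def ..
  moreover have "mu_low (A - F) B = liminf (\<lambda>n. ereal (r' n))" unfolding mu_low_def r'_def ..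
  moreover have "liminf (\<lambda>n. ereal (r n)) \<le> liminf (\<lambda>n. ereal (r' n))"
    unfolding liminf_bounded_iff
  proof (intro allI impI)
    fix C assume C: "C < liminf (\<lambda>n. ereal (r n))"
    show "\<exists>N. \<forall>n\<ge>N. C < ereal (r' n)"
    proof (cases C)
      case MInf then show ?thesis by auto
    next
      case PInf then show ?thesis using C by auto
    next
      case (real b)
      from dense[OF C] obtain C' where C': "C < C'" "C' < liminf (\<lambda>n. ereal (r n))" by blast
      have "C' \<noteq> \<infinity>" using C'(2) by auto
      moreover have "C' \<noteq> -\<infinity>" using C'(1) by auto
      ultimately obtain b' where b': "C' = ereal b'" by (cases C') auto
      from less_LiminfD[OF C'(2)] have "\<exists>N. \<forall>n\<ge>N. C' < ereal (r n)"
        unfolding eventually_sequentially by blast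
      then obtain N1 where N1: "\<forall>n\<ge>N1. b' < r n" using b' by auto
      have bb: "b < b'" using C'(1) real b' by simp
      obtain N2 :: nat where N2: "d / (b' - b) < real N2" using reals_Archimedean2 by blast
      have dpos: "d \<ge> 0" unfolding d_def by simp
      show ?thesis
      proof (intro exI[of _ "max N1 N2"] allI impI)
        fix n assume n: "max N1 N2 \<le> n"
        have "d / real (Suc n) < b' - b"
        proof -
          have "d < real N2 * (b' - b)" using N2 bb by (simp add: pos_divide_less_eq)
          then have "d < (b' - b) * real N2" by (simp add: mult.commute)
          also have "\<dots> \<le> (b' - b) * real (Suc n)" using n bb by (intro mult_left_mono) auto
          finally show ?thesis by (simp add: pos_divide_less_eq)
        qed
        moreover have "b' < r n" using N1 n by simp
        ultimately have "b < r' n" using key[of n] by linarith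
        then show "C < ereal (r' n)" using real by simp
      qed
    qed
  qed
  ultimately show ?thesis by simp
qed

lemma mu_low_self: assumes "infinite K" shows "mu_low K K = 1"
proof -
  have "card (K \<inter> prefix_B K (Suc n)) = Suc n" for n
  proof -
    have "K \<inter> prefix_B K (Suc n) = enumerate K ` {..<Suc n}"
      unfolding prefix_B_def using enumerate_in_set[OF assms] by auto
    moreover have "inj_on (enumerate K) {..<Suc n}"
      using strict_mono_enumerate[OF assms] by (meson inj_on_subset strict_mono_imp_inj_on subset_UNIV)
    ultimately show ?thesis by (simp add: card_image)
  qed
  then show ?thesis unfolding mu_low_def by (simp add: Liminf_const)
qed

definition Cf :: "(nat \<Rightarrow> nat set) \<Rightarrow> (nat \<Rightarrow> nat) \<Rightarrow> nat \<Rightarrow> nat \<Rightarrow> nat set" where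
  "Cf L x t n = {i. i \<le> t \<and> (\<forall>j. t \<le> j \<and> j < n \<longrightarrow> x j \<in> L i)}"

definition chg :: "(nat \<Rightarrow> nat set) \<Rightarrow> (nat \<Rightarrow> nat) \<Rightarrow> nat \<Rightarrow> nat \<Rightarrow> bool" where
  "chg L x t n \<longleftrightarrow> t = n \<or> Cf L x t n \<noteq> Cf L x t (n - 1)"

definition lev :: "(nat \<Rightarrow> nat set) \<Rightarrow> (nat \<Rightarrow> nat) \<Rightarrow> nat \<Rightarrow> nat" where
  "lev L x n = (LEAST t. chg L x t n)"

definition Gf :: "(nat \<Rightarrow> nat set) \<Rightarrow> (nat \<Rightarrow> nat) \<Rightarrow> nat \<Rightarrow> nat set" where
  "Gf L x n = (\<Inter>i\<in>Cf L x (lev L x n) n. L i) - x ` {..<n}"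

definition Gen :: "(nat \<Rightarrow> nat set) \<Rightarrow> nat list \<Rightarrow> nat set" where
  "Gen L xs = Gf L (\<lambda>j. xs ! j) (length xs)"

lemma Cf_cong: "(\<And>j. j < n \<Longrightarrow> y j = x j) \<Longrightarrow> m \<le> n \<Longrightarrow> Cf L y t m = Cf L x t m"
  unfolding Cf_def by auto

lemma chg_cong: "(\<And>j. j < n \<Longrightarrow> y j = x j) \<Longrightarrow> chg L y t n = chg L x t n"
  unfolding chg_def using Cf_cong[of n y x] by simp

lemma Gf_cong: assumes "\<And>j. j < n \<Longrightarrow> y j = x j" shows "Gf L y n = Gf L x n"
proof -
  have "lev L y n = lev L x n" unfolding lev_def using chg_cong[OF assms] by simp
  moreover have "y ` {..<n} = x ` {..<n}" using assms by auto
  ultimately show ?thesis unfolding Gf_def using Cf_cong[OF assms, of n] by simp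
qed

lemma gen_out_Gen: "gen_out (Gen L) x n = Gf L x n"
  unfolding gen_out_def Gen_def length_map length_upt diff_zero by (rule Gf_cong) auto

lemma set_generator_Gen: "set_generator (Gen L)"
  unfolding set_generator_def Gen_def Gf_def by (auto simp: in_set_conv_nth)

lemma Cf_antimono: "n \<le> m \<Longrightarrow> Cf L x t m \<subseteq> Cf L x t n"
  unfolding Cf_def by auto

lemma chg_lev: "chg L x (lev L x n) n" and lev_le: "lev L x n \<le> n"
proof -
  have "chg L x n n" unfolding chg_def by simp
  then show "chg L x (lev L x n) n" "lev L x n \<le> n" unfolding lev_def
    by (auto intro: LeastI Least_le)
qed

lemma Cf_stable: "\<exists>n1. \<forall>n\<ge>n1. Cf L x t n = Cf L x t n1"
proof -
  define g where "g n = card (Cf L x t n)" for n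
  have fin: "finite (Cf L x t n)" for n unfolding Cf_def by auto
  obtain n1 where n1: "g n1 = (LEAST v. v \<in> range g)" by (metis (mono_tags) LeastI rangeE rangeI)
  have "Cf L x t n = Cf L x t n1" if "n \<ge> n1" for n
  proof -
    have sub: "Cf L x t n \<subseteq> Cf L x t n1" using Cf_antimono[OF that] .
    have "g n1 \<le> g n" unfolding n1 by (rule Least_le) auto
    then show ?thesis using sub fin unfolding g_def by (meson card_subset_eq card_mono antisym)
  qed
  then show ?thesis by blast
qed

lemma no_chg_ev: "\<exists>n0. \<forall>n\<ge>n0. \<not> chg L x t n"
proof -
  obtain n1 where n1: "\<forall>n\<ge>n1. Cf L x t n = Cf L x t n1" using Cf_stable by blast
  show ?thesis
  proof (intro exI[of _ "Suc (max n1 t)"] allI impI)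
    fix n assume "Suc (max n1 t) \<le> n"
    then show "\<not> chg L x t n" unfolding chg_def using n1[rule_format, of n] n1[rule_format, of "n - 1"] by auto
  qed
qed

lemma lev_big: "\<exists>n0. \<forall>n\<ge>n0. b < lev L x n"
proof -
  have "\<forall>t\<in>{..b}. eventually (\<lambda>n. \<not> chg L x t n) sequentially"
    using no_chg_ev unfolding eventually_sequentially by blast
  then have "eventually (\<lambda>n. \<forall>t\<in>{..b}. \<not> chg L x t n) sequentially"
    by (rule eventually_ball_finite[rotated]) simp
  then obtain n0 where n0: "\<forall>n\<ge>n0. \<forall>t\<le>b. \<not> chg L x t n" unfolding eventually_sequentially by auto
  show ?thesis
  proof (intro exI[of _ n0] allI impI)
    fix n assume "n0 \<le> n"
    then show "b < lev L x n" using n0 chg_lev[of L x n] by (meson not_le)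
  qed
qed

lemma clean_times:
  "\<exists>n\<ge>n0. b \<le> lev L x n \<and> (\<forall>m\<ge>n. Cf L x (lev L x n) m = Cf L x (lev L x n) n)"
proof -
  obtain na where na: "\<forall>n\<ge>na. b < lev L x n" using lev_big by blast
  define v where "v = max n0 na"
  obtain nb where nb: "\<forall>n\<ge>nb. v < lev L x n" using lev_big by blast
  define P where "P = {n. lev L x n \<le> v}"
  have "P \<subseteq> {..<nb}"
  proof
    fix m assume "m \<in> P"
    then have "lev L x m \<le> v" unfolding P_def by simp
    show "m \<in> {..<nb}"
    proof (rule ccontr)
      assume "m \<notin> {..<nb}"
      then have "v < lev L x m" using nb by simp
      then show False using \<open>lev L x m \<le> v\<close> by simp
    qed
  qed
  then have finP: "finite P" by (rule finite_subset) simp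
  have vP: "v \<in> P" unfolding P_def using lev_le by simp
  define n where "n = Max P"
  have Pne: "P \<noteq> {}" using vP by blast
  have nP: "n \<in> P" unfolding n_def by (rule Max_in[OF finP Pne])
  have vn: "v \<le> n" unfolding n_def by (rule Max_ge[OF finP vP])
  have maxP: "m \<in> P \<Longrightarrow> m \<le> n" for m unfolding n_def using finP by simp
  define u where "u = lev L x n"
  have uv: "u \<le> v" using nP unfolding P_def u_def by simp
  have nochg: "\<not> chg L x u m" if "m > n" for m
  proof
    assume "chg L x u m"
    then have "lev L x m \<le> u" unfolding lev_def by (rule Least_le)
    then have "m \<in> P" unfolding P_def using uv by simp
    then show False using maxP[OF \<open>m \<in> P\<close>] that by simp
  qed
  have st: "Cf L x u m = Cf L x u n" if "m \<ge> n" for m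
    using that
  proof (induction m rule: dec_induct)
    case base then show ?case by simp
  next
    case (step m)
    have "\<not> chg L x u (Suc m)" using nochg step by simp
    then show ?case using step unfolding chg_def by simp
  qed
  have "n \<ge> n0" "n \<ge> na" using vn unfolding v_def by auto
  then have "b \<le> lev L x n" using na by (simp add: less_imp_le)
  moreover have "\<forall>m\<ge>n. Cf L x (lev L x n) m = Cf L x (lev L x n) n"
    using st unfolding u_def by blast
  ultimately show ?thesis using \<open>n \<ge> n0\<close> by blast
qed

lemma main:
  assumes Lz: "L z = K" and KhK: "Kh \<subseteq> K" and en: "enum_finite_noise Kh x"
  shows "\<exists>n0. \<forall>n\<ge>n0. Gf L x n \<subseteq> K"
    and "mu_low Kh K \<le> limsup (\<lambda>n. mu_low (Gf L x n) K)"
proof -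
  have injx: "inj x" and Khr: "Kh \<subseteq> range x" and fr: "finite (range x - Kh)"
    using en unfolding enum_finite_noise_def enumeration_def by auto
  have "finite (x -` (range x - Kh))" using fr injx by (intro finite_vimageI) auto
  moreover have "{j. x j \<notin> Kh} = x -` (range x - Kh)" by auto
  ultimately have "finite {j. x j \<notin> Kh}" by simp
  then obtain N where N: "\<forall>j\<in>{j. x j \<notin> Kh}. j \<le> N" using finite_nat_set_iff_bounded_le by blast
  have xN: "x j \<in> Kh" if "j > N" for j using N that by force
  define K0 where "K0 = max z (Suc N)"
  have zin: "z \<in> Cf L x t n" if "K0 \<le> t" for t n
    unfolding Cf_def using that xN KhK Lz unfolding K0_def by auto
  have safe: "Gf L x n \<subseteq> K" if "K0 \<le> lev L x n" for n
    using zin[OF that, of n] Lz unfolding Gf_def by blast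
  obtain na where na: "\<forall>n\<ge>na. K0 < lev L x n" using lev_big by blast
  show "\<exists>n0. \<forall>n\<ge>n0. Gf L x n \<subseteq> K" using na safe by (meson less_imp_le)
  have freq: "\<exists>n\<ge>n0. mu_low Kh K \<le> mu_low (Gf L x n) K" for n0
  proof -
    obtain n where n: "n \<ge> n0" "K0 \<le> lev L x n"
      and st: "\<forall>m\<ge>n. Cf L x (lev L x n) m = Cf L x (lev L x n) n"
      using clean_times by blast
    have sup: "Kh - x ` {..<n} \<subseteq> Gf L x n"
    proof
      fix y assume y: "y \<in> Kh - x ` {..<n}"
      then obtain j where j: "y = x j" using Khr by auto
      have jn: "j \<ge> n" using y j by (auto simp: not_le[symmetric])
      have "x j \<in> L i" if "i \<in> Cf L x (lev L x n) n" for i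
      proof -
        have "Suc j \<ge> n" using jn by simp
        note eq = st[rule_format, OF this]
        have "i \<in> Cf L x (lev L x n) (Suc j)" using that unfolding eq .
        then show ?thesis unfolding Cf_def using lev_le[of L x n] jn by auto
      qed
      then show "y \<in> Gf L x n" unfolding Gf_def using y j by auto
    qed
    have "mu_low Kh K \<le> mu_low (Kh - x ` {..<n}) K" by (rule mu_low_diff_finite) simp
    also have "\<dots> \<le> mu_low (Gf L x n) K" by (rule mu_low_mono[OF sup])
    finally show ?thesis using n by blast
  qed
  show "mu_low Kh K \<le> limsup (\<lambda>n. mu_low (Gf L x n) K)"
  proof (rule ccontr)
    assume "\<not> ?thesis"
    then have "limsup (\<lambda>n. mu_low (Gf L x n) K) < mu_low Kh K" by simp
    then have "eventually (\<lambda>n. mu_low (Gf L x n) K < mu_low Kh K) sequentially"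
      by (rule Limsup_lessD)
    then obtain n0 where "\<forall>n\<ge>n0. mu_low (Gf L x n) K < mu_low Kh K"
      unfolding eventually_sequentially by blast
    then show False using freq[of n0] by (meson not_le)
  qed
qed

theorem theorem6p1:
  fixes c :: real and Lc :: "nat set set"
  assumes "0 \<le> c" and "c \<le> 1" and "collection Lc"
  shows "(\<exists>G. set_generator G
             \<and> generates_in_limit G Lc (enum_noise_c_omissions c)
             \<and> achieves_set_upper_density G Lc (enum_noise_c_omissions c) (1 - c))
       \<and> (\<exists>G. set_generator G
             \<and> generates_in_limit G Lc enum_noise_fin_omissions
             \<and> achieves_set_upper_density G Lc enum_noise_fin_omissions 1)"
proof -
  define L where "L = from_nat_into Lc"
  have cnt: "countable Lc" and infL: "\<And>K. K \<in> Lc \<Longrightarrow> infinite K"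
    using assms(3) unfolding collection_def by auto
  have getz: "\<exists>z. L z = K" if "K \<in> Lc" for K
    unfolding L_def using from_nat_into_surj[OF cnt that] by blast
  have A: "\<exists>n0. \<forall>n\<ge>n0. gen_out (Gen L) x n \<subseteq> K"
    "mu_low Kh K \<le> limsup (\<lambda>n. mu_low (gen_out (Gen L) x n) K)"
    if KL: "K \<in> Lc" "Kh \<subseteq> K" "enum_finite_noise Kh x" for K Kh x
  proof -
    obtain z where "L z = K" using getz[OF KL(1)] by blast
    from main[where L=L and z=z and K=K and Kh=Kh and x=x, OF this KL(2,3)] show
      "\<exists>n0. \<forall>n\<ge>n0. gen_out (Gen L) x n \<subseteq> K"
      "mu_low Kh K \<le> limsup (\<lambda>n. mu_low (gen_out (Gen L) x n) K)"
      unfolding gen_out_Gen by auto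
  qed
  have P1: "set_generator (Gen L)
             \<and> generates_in_limit (Gen L) Lc (enum_noise_c_omissions c)
             \<and> achieves_set_upper_density (Gen L) Lc (enum_noise_c_omissions c) (1 - c)"
    unfolding generates_in_limit_def achieves_set_upper_density_def enum_noise_c_omissions_def
  proof (intro conjI set_generator_Gen ballI allI impI)
    fix K x assume K: "K \<in> Lc" and "\<exists>Kh\<subseteq>K. ereal (1 - c) \<le> mu_low Kh K \<and> enum_finite_noise Kh x"
    then obtain Kh where Kh: "Kh \<subseteq> K" "ereal (1 - c) \<le> mu_low Kh K" "enum_finite_noise Kh x" by blast
    show "\<exists>n0. \<forall>n\<ge>n0. gen_out (Gen L) x n \<subseteq> K" using A(1)[OF K Kh(1,3)] .
    show "ereal (1 - c) \<le> limsup (\<lambda>n. mu_low (gen_out (Gen L) x n) K)"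
      using A(2)[OF K Kh(1,3)] Kh(2) by (rule order_trans[rotated])
  qed
  have one: "ereal 1 \<le> mu_low Kh K" if "K \<in> Lc" "Kh \<subseteq> K" "finite (K - Kh)" for K Kh
  proof -
    have "mu_low K K \<le> mu_low (K - (K - Kh)) K" by (rule mu_low_diff_finite[OF that(3)])
    moreover have "K - (K - Kh) = Kh" using that(2) by auto
    ultimately have "1 \<le> mu_low Kh K" using mu_low_self[OF infL[OF that(1)]] by simp
    then show ?thesis unfolding one_ereal_def .
  qed
  have P2: "set_generator (Gen L)
             \<and> generates_in_limit (Gen L) Lc enum_noise_fin_omissions
             \<and> achieves_set_upper_density (Gen L) Lc enum_noise_fin_omissions 1"
    unfolding generates_in_limit_def achieves_set_upper_density_def enum_noise_fin_omissions_def
  proof (intro conjI set_generator_Gen ballI allI impI)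
    fix K x assume K: "K \<in> Lc" and "\<exists>Kh\<subseteq>K. finite (K - Kh) \<and> enum_finite_noise Kh x"
    then obtain Kh where Kh: "Kh \<subseteq> K" "finite (K - Kh)" "enum_finite_noise Kh x" by blast
    show "\<exists>n0. \<forall>n\<ge>n0. gen_out (Gen L) x n \<subseteq> K" using A(1)[OF K Kh(1,3)] .
    show "ereal 1 \<le> limsup (\<lambda>n. mu_low (gen_out (Gen L) x n) K)"
      using A(2)[OF K Kh(1,3)] one[OF K Kh(1,2)] by (rule order_trans[rotated])
  qed
  show ?thesis using P1 P2 by blast
qed

end
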